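(* Let $\rho^w$ and $\rho^b$ be convex risk measures. Then an equal risk price exists if and only if the fair price interval is bounded (i.e. $p_0^w\in\mathbb{R}$ and $p_0^b\in\mathbb{R}$). Moreover, when it exists, the equal risk price equals \[p_0^*=\frac{\varrho^w(0)-\varrho^b(0)}{2},\] which is the center of the fair price interval $[p_0^b,p_0^w]$ if the latter is non-empty.
   Context: Let $(\Omega,\mathcal{F},(\mathcal{F}_t)_{0\le t\le T},\mathbb{P})$ be a filtered probability space, with a money market account with zero interest rate and a risky asset $S_t$, a locally bounded real-valued semimartingale adapted to the filtration; the set of equivalent local martingale measures for $S$ is non-empty. For $p_0\in\mathbb{R}$, the set of admissible self-financing strategies is $\mathcal{X}(p_0)=\{X: \exists\,\xi\ \text{adapted},\ \exists c\in\mathbb{R},\ X_t=p_0+\int_0^t\xi_s\,dS_s\ge c\ \forall t\in[0,T]\}$. The option pays $F(S_T,Y_T)$ at $T$, where $Y_t$ is an adapted auxiliary finite-dimensional process. A risk measure maps random liabilities (costs) in $\mathcal{L}_p(\Omega,\mathcal{F}_T,\mathbb{P})$ to $\mathbb{R}\cup\{\infty\}$. A convex risk measure $\rho$ satisfies: monotonicity ($X\le Z$ a.s. $\Rightarrow \rho(X)\le\rho(Z)$), translation invariance ($\rho(X+m)=\rho(X)+m$ for $m\in\mathbb{R}$), normalization $\rho(0)=0$, and convexity ($\rho(\lambda X+(1-\lambda)Z)\le\lambda\rho(X)+(1-\lambda)\rho(Z)$ for $\lambda\in[0,1]$). Given risk measures $\rho^w,\rho^b$, define the minimal risks $\varrho^w(p_0)=\inf_{X\in\mathcal{X}(p_0)}\rho^w(F(S_T,Y_T)-X_T)$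 and $\varrho^b(p_0)=\inf_{X\in\mathcal{X}(-p_0)}\rho^b(-F(S_T,Y_T)-X_T)$. The equal risk price is the unique $p_0^*\in\mathbb{R}$ such that $\varrho^w(p_0^* )=\varrho^b(p_0^* )\in\mathbb{R}$, when such a unique price exists. The fair price interval is $[p_0^b,p_0^w]$ with $p_0^b=\sup\{p_0:\varrho^b(p_0)\le 0\}$ and $p_0^w=\inf\{p_0:\varrho^w(p_0)\le 0\}$. *)

theory Defs
  imports "HOL-Probability.Probability"
begin

definition rv_space :: "'w measure \<Rightarrow> ('w \<Rightarrow> real) set \<Rightarrow> bool" where
  "rv_space M D \<longleftrightarrow> D \<subseteq> borel_measurable M \<and> (\<lambda>_. 1) \<in> D \<and>
     (\<forall>X\<in>D. \<forall>Z\<in>D. \<forall>a b. (\<lambda>\<omega>. a * X \<omega> + b * Z \<omega>) \<in> D)"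

definition convex_risk_measure ::
  "'w measure \<Rightarrow> ('w \<Rightarrow> real) set \<Rightarrow> (('w \<Rightarrow> real) \<Rightarrow> ereal) \<Rightarrow> bool" where
  "convex_risk_measure M D \<rho> \<longleftrightarrow>
     (\<forall>X\<in>D. \<rho> X \<noteq> -\<infinity>) \<and>
     (\<forall>X\<in>D. \<forall>Z\<in>D. (AE \<omega> in M. X \<omega> \<le> Z \<omega>) \<longrightarrow> \<rho> X \<le> \<rho> Z) \<and>
     (\<forall>X\<in>D. \<forall>m::real. \<rho> (\<lambda>\<omega>. X \<omega> + m) = \<rho> X + ereal m) \<and>
     \<rho> (\<lambda>_. 0) = 0 \<and>
     (\<forall>X\<in>D. \<forall>Z\<in>D. \<forall>t::real. 0 \<le> t \<and> t \<le> 1 \<longrightarrow>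
        \<rho> (\<lambda>\<omega>. t * X \<omega> + (1 - t) * Z \<omega>) \<le> ereal t * \<rho> X + ereal (1 - t) * \<rho> Z)"

text \<open>G is the set of terminal gains (\<integral>\<xi> dS at T) of admissible strategies, so the terminal values
  of X(p0) are exactly p0 + g, g \<in> G.  H is the payoff F(S_T,Y_T).\<close>
definition min_risk_w :: "(('w \<Rightarrow> real) \<Rightarrow> ereal) \<Rightarrow> ('w \<Rightarrow> real) \<Rightarrow> ('w \<Rightarrow> real) set \<Rightarrow> real \<Rightarrow> ereal" where
  "min_risk_w \<rho> H G p0 = (INF g\<in>G. \<rho> (\<lambda>\<omega>. H \<omega> - (p0 + g \<omega>)))"

definition min_risk_b :: "(('w \<Rightarrow> real) \<Rightarrow> ereal) \<Rightarrow> ('w \<Rightarrow> real) \<Rightarrow> ('w \<Rightarrow> real) set \<Rightarrow> real \<Rightarrow> ereal" where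
  "min_risk_b \<rho> H G p0 = (INF g\<in>G. \<rho> (\<lambda>\<omega>. - H \<omega> - (- p0 + g \<omega>)))"

definition equal_risk_cond where
  "equal_risk_cond \<rho>w \<rho>b H G p0 \<longleftrightarrow>
     min_risk_w \<rho>w H G p0 = min_risk_b \<rho>b H G p0 \<and> \<bar>min_risk_w \<rho>w H G p0\<bar> \<noteq> \<infinity>"

definition equal_risk_price_exists where
  "equal_risk_price_exists \<rho>w \<rho>b H G \<longleftrightarrow> (\<exists>!p0. equal_risk_cond \<rho>w \<rho>b H G p0)"

definition fair_price_w :: "(('w \<Rightarrow> real) \<Rightarrow> ereal) \<Rightarrow> ('w \<Rightarrow> real) \<Rightarrow> ('w \<Rightarrow> real) set \<Rightarrow> ereal" where
  "fair_price_w \<rho> H G = Inf {ereal p0 | p0. min_risk_w \<rho> H G p0 \<le> 0}"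

definition fair_price_b :: "(('w \<Rightarrow> real) \<Rightarrow> ereal) \<Rightarrow> ('w \<Rightarrow> real) \<Rightarrow> ('w \<Rightarrow> real) set \<Rightarrow> ereal" where
  "fair_price_b \<rho> H G = Sup {ereal p0 | p0. min_risk_b \<rho> H G p0 \<le> 0}"

end

theory Submission
  imports Defs
begin

lemma INF_add_real: "(INF x\<in>I. f x + ereal c) = (INF x\<in>I. f x) + (ereal c :: ereal)"
proof (rule antisym)
  show "(INF x\<in>I. f x) + ereal c \<le> (INF x\<in>I. f x + ereal c)"
    by (rule INF_greatest) (intro add_right_mono INF_lower)
  have "(INF x\<in>I. f x + ereal c) + ereal (-c) \<le> (INF x\<in>I. f x)"
  proof (rule INF_greatest)
    fix x assume "x \<in> I"
    then have "(INF x\<in>I. f x + ereal c) \<le> f x + ereal c" by (rule INF_lower)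
    then have "(INF x\<in>I. f x + ereal c) + ereal (-c) \<le> f x + ereal c + ereal (-c)" by (rule add_right_mono)
    also have "\<dots> = f x" by (cases "f x") auto
    finally show "(INF x\<in>I. f x + ereal c) + ereal (-c) \<le> f x" .
  qed
  then have "(INF x\<in>I. f x + ereal c) + ereal (-c) + ereal c \<le> (INF x\<in>I. f x) + ereal c" by (rule add_right_mono)
  then show "(INF x\<in>I. f x + ereal c) \<le> (INF x\<in>I. f x) + ereal c"
    by (cases "(INF x\<in>I. f x + ereal c)") auto
qed

lemma mrw_shift:
  assumes "rv_space M D" "convex_risk_measure M D \<rho>" "H \<in> D" "G \<subseteq> D"
  shows "min_risk_w \<rho> H G p = min_risk_w \<rho> H G 0 + ereal (-p)"
proof -
  have "\<rho> (\<lambda>\<omega>. H \<omega> - (p + g \<omega>)) = \<rho> (\<lambda>\<omega>. H \<omega> - (0 + g \<omega>)) + ereal (-p)" if "g \<in> G" for g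
  proof -
    have gD: "g \<in> D" using that assms(4) by auto
    have "(\<lambda>\<omega>. 1 * H \<omega> + (-1) * g \<omega>) \<in> D" using assms(1,3) gD unfolding rv_space_def by blast
    moreover have "(\<lambda>\<omega>. 1 * H \<omega> + (-1) * g \<omega>) = (\<lambda>\<omega>. H \<omega> - (0 + g \<omega>))" by auto
    ultimately have X: "(\<lambda>\<omega>. H \<omega> - (0 + g \<omega>)) \<in> D" by simp
    have "(\<lambda>\<omega>. H \<omega> - (p + g \<omega>)) = (\<lambda>\<omega>. (H \<omega> - (0 + g \<omega>)) + (-p))" by auto
    then show ?thesis using X assms(2) unfolding convex_risk_measure_def by metis
  qed
  then show ?thesis unfolding min_risk_w_def
    by (simp add: INF_add_real[symmetric] cong: INF_cong)
qed

lemma mrb_shift: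
  assumes "rv_space M D" "convex_risk_measure M D \<rho>" "H \<in> D" "G \<subseteq> D"
  shows "min_risk_b \<rho> H G p = min_risk_b \<rho> H G 0 + ereal p"
proof -
  have "\<rho> (\<lambda>\<omega>. - H \<omega> - (- p + g \<omega>)) = \<rho> (\<lambda>\<omega>. - H \<omega> - (- 0 + g \<omega>)) + ereal p" if "g \<in> G" for g
  proof -
    have gD: "g \<in> D" using that assms(4) by auto
    have "(\<lambda>\<omega>. (-1) * H \<omega> + (-1) * g \<omega>) \<in> D" using assms(1,3) gD unfolding rv_space_def by blast
    moreover have "(\<lambda>\<omega>. (-1) * H \<omega> + (-1) * g \<omega>) = (\<lambda>\<omega>. - H \<omega> - (- 0 + g \<omega>))" by auto
    ultimately have X: "(\<lambda>\<omega>. - H \<omega> - (- 0 + g \<omega>)) \<in> D" by simp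
    have "(\<lambda>\<omega>. - H \<omega> - (- p + g \<omega>)) = (\<lambda>\<omega>. (- H \<omega> - (- 0 + g \<omega>)) + p)" by auto
    then show ?thesis using X assms(2) unfolding convex_risk_measure_def by metis
  qed
  then show ?thesis unfolding min_risk_b_def
    by (simp add: INF_add_real[symmetric] cong: INF_cong)
qed

lemma fw_val:
  fixes A :: ereal
  shows "Inf {ereal p0 | p0. A + ereal (-p0) \<le> 0} = A"
proof (cases A)
  case (real a)
  have "{ereal p0 | p0. A + ereal (-p0) \<le> 0} = {ereal p0 | p0. a \<le> p0}" using real by auto
  moreover have "Inf {ereal p0 | p0. a \<le> p0} = ereal a"
    by (rule antisym) (auto intro: Inf_lower Inf_greatest)
  ultimately show ?thesis using real by simp
next
  case PInf
  then have "{ereal p0 | p0. A + ereal (-p0) \<le> 0} = {}" by auto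
  then show ?thesis using PInf by (simp add: top_ereal_def bot_ereal_def)
next
  case MInf
  have "Inf {ereal p0 | p0. A + ereal (-p0) \<le> 0} = -\<infinity>"
    by (rule ereal_bot, rule Inf_lower) (use MInf in auto)
  then show ?thesis using MInf by simp
qed

lemma fb_val:
  fixes B :: ereal
  shows "Sup {ereal p0 | p0. B + ereal p0 \<le> 0} = - B"
proof (cases B)
  case (real b)
  have "{ereal p0 | p0. B + ereal p0 \<le> 0} = {ereal p0 | p0. p0 \<le> -b}" using real by auto
  moreover have "Sup {ereal p0 | p0. p0 \<le> -b} = ereal (-b)"
    by (rule antisym) (auto intro: Sup_upper Sup_least)
  ultimately show ?thesis using real by simp
next
  case PInf
  then have "{ereal p0 | p0. B + ereal p0 \<le> 0} = {}" by auto
  then show ?thesis using PInf by (simp add: top_ereal_def bot_ereal_def)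
next
  case MInf
  have "Sup {ereal p0 | p0. B + ereal p0 \<le> 0} = \<infinity>"
    by (rule ereal_top, rule Sup_upper) (use MInf in auto)
  then show ?thesis using MInf by simp
qed

theorem proposition1:
  fixes M :: "'w measure" and D :: "('w \<Rightarrow> real) set"
    and \<rho>w \<rho>b :: "('w \<Rightarrow> real) \<Rightarrow> ereal"
    and H :: "'w \<Rightarrow> real" and G :: "('w \<Rightarrow> real) set"
  assumes "prob_space M"
    and "rv_space M D"
    and "convex_risk_measure M D \<rho>w" and "convex_risk_measure M D \<rho>b"
    and "H \<in> D" and "G \<subseteq> D" and "(\<lambda>_. 0) \<in> G"
  shows "(equal_risk_price_exists \<rho>w \<rho>b H G \<longleftrightarrow>
           \<bar>fair_price_w \<rho>w H G\<bar> \<noteq> \<infinity> \<and> \<bar>fair_price_b \<rho>b H G\<bar> \<noteq> \<infinity>)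
       \<and> (\<forall>p. equal_risk_price_exists \<rho>w \<rho>b H G \<and> equal_risk_cond \<rho>w \<rho>b H G p \<longrightarrow>
            ereal p = (min_risk_w \<rho>w H G 0 - min_risk_b \<rho>b H G 0) / 2
            \<and> (fair_price_b \<rho>b H G \<le> fair_price_w \<rho>w H G \<longrightarrow>
                 ereal p = (fair_price_b \<rho>b H G + fair_price_w \<rho>w H G) / 2))"
proof -
  define A where "A = min_risk_w \<rho>w H G 0"
  define B where "B = min_risk_b \<rho>b H G 0"
  have w: "\<And>p. min_risk_w \<rho>w H G p = A + ereal (-p)"
    unfolding A_def using mrw_shift[OF assms(2,3,5,6)] by blast
  have b: "\<And>p. min_risk_b \<rho>b H G p = B + ereal p"
    unfolding B_def using mrb_shift[OF assms(2,4,5,6)] by blast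
  have fw: "fair_price_w \<rho>w H G = A" unfolding fair_price_w_def w by (rule fw_val)
  have fb: "fair_price_b \<rho>b H G = - B" unfolding fair_price_b_def b by (rule fb_val)
  have cond: "equal_risk_cond \<rho>w \<rho>b H G p \<longleftrightarrow> (\<exists>a b. A = ereal a \<and> B = ereal b \<and> p = (a - b) / 2)" for p
    unfolding equal_risk_cond_def w b
    by (cases A; cases B) auto
  have ex: "equal_risk_price_exists \<rho>w \<rho>b H G \<longleftrightarrow> \<bar>A\<bar> \<noteq> \<infinity> \<and> \<bar>B\<bar> \<noteq> \<infinity>"
    unfolding equal_risk_price_exists_def cond
  proof (cases A; cases B)
    fix a b assume "A = ereal a" "B = ereal b"
    then show "(\<exists>!p. \<exists>a b. A = ereal a \<and> B = ereal b \<and> p = (a - b) / 2) = (\<bar>A\<bar> \<noteq> \<infinity> \<and> \<bar>B\<bar> \<noteq> \<infinity>)"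
      by (auto intro!: exI[of _ "(a - b) / 2"])
  qed auto
  show ?thesis
    unfolding fw fb ex A_def[symmetric] B_def[symmetric] cond
    by (cases A; cases B) (auto simp: field_simps)
qed

end
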